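(* Let $s\ge 1$ be a fixed integer. Consider a sequence of $(s+1)$-tuples of integers $2\le n_0\le n_1\le\dots\le n_s$ (indexed so that $n_s\to\infty$) such that $n_0=(\log n_s)^{\alpha}$ with $\alpha\ge 2\sqrt{\frac{\log n_s}{\log\log n_s}}$. For every $0\le i\le s-1$ let $k_i=\frac{\log n_s}{\log n_i}$, and let $x_0$ be the unique root of the equation $sx-1-\sum_{j=0}^{s-1}x^{\frac{k_j-1}{k_j}}=0$ in the interval $[1,\infty)$. Then $$ch(K_{n_0,\dots,n_s})\ge(1-o(1))\frac{\log n_s}{\log x_0}$$ as $n_s\to\infty$.
   Context: All logarithms are to base 2. For a graph $G=(V,E)$, the choice number $ch(G)$ is the minimum integer $k$ such that for every assignment of a list $S(v)$ of at least $k$ colors to each vertex $v\in V$, there is a proper vertex coloring of $G$ assigning to each vertex $v$ a color from $S(v)$. $K_{n_0,\dots,n_s}$ denotes the complete $(s+1)$-partite graph with parts of sizes $n_0,\dots,n_s$. *)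

theory Defs
  imports Complex_Main
begin

text \<open>A list assignment gives each vertex a finite set of colours (colours are
  natural numbers, which is no restriction for finite graphs).\<close>

definition choosable :: "'v set \<Rightarrow> ('v \<Rightarrow> 'v \<Rightarrow> bool) \<Rightarrow> nat \<Rightarrow> bool" where
  "choosable V E k \<longleftrightarrow>
     (\<forall>L :: 'v \<Rightarrow> nat set. (\<forall>v\<in>V. finite (L v) \<and> k \<le> card (L v)) \<longrightarrow>
        (\<exists>c. (\<forall>v\<in>V. c v \<in> L v) \<and> (\<forall>u\<in>V. \<forall>v\<in>V. E u v \<longrightarrow> c u \<noteq> c v)))"

definition choice_number :: "'v set \<Rightarrow> ('v \<Rightarrow> 'v \<Rightarrow> bool) \<Rightarrow> nat" where
  "choice_number V E = (LEAST k. choosable V E k)"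

text \<open>Complete (s+1)-partite graph K_{n_0,...,n_s}: vertex (i,j) is the j-th
  vertex of part i; two vertices are adjacent iff they lie in different parts.\<close>

definition cmp_vertices :: "nat \<Rightarrow> (nat \<Rightarrow> nat) \<Rightarrow> (nat \<times> nat) set" where
  "cmp_vertices s n = {(i, j). i \<le> s \<and> j < n i}"

definition cmp_adj :: "nat \<times> nat \<Rightarrow> nat \<times> nat \<Rightarrow> bool" where
  "cmp_adj u v \<longleftrightarrow> fst u \<noteq> fst v"

definition ch_complete_multipartite :: "nat \<Rightarrow> (nat \<Rightarrow> nat) \<Rightarrow> nat" where
  "ch_complete_multipartite s n = choice_number (cmp_vertices s n) cmp_adj"

end

theory Submission
  imports Defs "HOL-Library.FuncSet"
begin

lemma choosable_mono:
  assumes "choosable V E k" "k \<le> k'" shows "choosable V E k'"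
  unfolding choosable_def
proof (intro allI impI)
  fix L :: "'a \<Rightarrow> nat set"
  assume "\<forall>v\<in>V. finite (L v) \<and> k' \<le> card (L v)"
  then have "\<forall>v\<in>V. finite (L v) \<and> k \<le> card (L v)" using assms(2) by auto
  then show "\<exists>c. (\<forall>v\<in>V. c v \<in> L v) \<and> (\<forall>u\<in>V. \<forall>v\<in>V. E u v \<longrightarrow> c u \<noteq> c v)"
    using assms(1) unfolding choosable_def by blast
qed

lemma choosable_card:
  assumes "finite V" "\<forall>u. \<not> E u u"
  shows "choosable V E (card V)"
proof -
  have "\<forall>L :: 'a \<Rightarrow> nat set. (\<forall>v\<in>V. finite (L v) \<and> card V \<le> card (L v)) \<longrightarrow>
        (\<exists>c. (\<forall>v\<in>V. c v \<in> L v) \<and> inj_on c V)"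
    using assms(1)
  proof (induction V rule: finite_induct)
    case empty
    then show ?case by auto
  next
    case (insert x F)
    show ?case
    proof (intro allI impI)
      fix L :: "'a \<Rightarrow> nat set"
      assume H: "\<forall>v\<in>insert x F. finite (L v) \<and> card (insert x F) \<le> card (L v)"
      then have "\<forall>v\<in>F. finite (L v) \<and> card F \<le> card (L v)"
        using insert by auto
      with insert.IH obtain c where c: "\<forall>v\<in>F. c v \<in> L v" "inj_on c F" by blast
      have "card (c ` F) < card (L x)"
        using H insert card_image_le[of F c] by auto
      then have "\<not> L x \<subseteq> c ` F"
        using H by (meson card_mono finite_imageI insert.hyps(1) leD)
      then obtain y where y: "y \<in> L x" "y \<notin> c ` F" by blast
      define c' where "c' = c(x := y)"
      have "\<forall>v\<in>insert x F. c' v \<in> L v" using c y insert.hyps unfolding c'_def by auto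
      moreover have "inj_on c' (insert x F)"
        using c y insert.hyps unfolding c'_def inj_on_def
        by (smt (verit, best) fun_upd_apply image_iff insert_iff)
      ultimately show "\<exists>c. (\<forall>v\<in>insert x F. c v \<in> L v) \<and> inj_on c (insert x F)" by blast
    qed
  qed
  then show ?thesis unfolding choosable_def
  proof (intro allI impI)
    fix L :: "'a \<Rightarrow> nat set"
    assume H: "\<forall>L :: 'a \<Rightarrow> nat set. (\<forall>v\<in>V. finite (L v) \<and> card V \<le> card (L v)) \<longrightarrow>
        (\<exists>c. (\<forall>v\<in>V. c v \<in> L v) \<and> inj_on c V)"
      and L: "\<forall>v\<in>V. finite (L v) \<and> card V \<le> card (L v)"
    from H L obtain c where c: "\<forall>v\<in>V. c v \<in> L v" "inj_on c V" by blast
    have "\<forall>u\<in>V. \<forall>v\<in>V. E u v \<longrightarrow> c u \<noteq> c v"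
    proof (intro ballI impI)
      fix u v assume "u \<in> V" "v \<in> V" "E u v"
      then have "u \<noteq> v" using assms(2) by auto
      then show "c u \<noteq> c v" using c(2) \<open>u \<in> V\<close> \<open>v \<in> V\<close> by (meson inj_onD)
    qed
    with c show "\<exists>c. (\<forall>v\<in>V. c v \<in> L v) \<and> (\<forall>u\<in>V. \<forall>v\<in>V. E u v \<longrightarrow> c u \<noteq> c v)" by blast
  qed
qed

lemma ch_ge:
  assumes "finite V" "\<forall>u. \<not> E u u" "\<not> choosable V E K"
  shows "K + 1 \<le> choice_number V E"
proof -
  have ex: "choosable V E (card V)" using choosable_card[of V E] assms by blast
  have "choosable V E (choice_number V E)"
    unfolding choice_number_def by (rule LeastI[where P="\<lambda>k. choosable V E k", OF ex])
  then show ?thesis proof -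
    assume h: "choosable V E (choice_number V E)"
    show ?thesis
    proof (rule ccontr)
      assume "\<not> K + 1 \<le> choice_number V E"
      then have "choice_number V E \<le> K" by simp
      with h have "choosable V E K" by (rule choosable_mono)
      with assms(3) show False by simp
    qed
  qed
qed

lemma binom_ratio:
  fixes a N K :: nat
  assumes "K \<le> a" "a \<le> N"
  shows "((real a - real K) / real N) ^ K \<le> real (a choose K) / real (N choose K)"
proof -
  have "real (a choose K) / real (N choose K) = (\<Prod>i = 0..<K. (real a - real i) / (real N - real i))"
    unfolding binomial_gbinomial gbinomial_altdef_of_nat prod_dividef[symmetric]
    using assms by (auto simp: prod_dividef intro!: prod.cong)
  also have "\<dots> \<ge> (\<Prod>i = 0..<K. (real a - real K) / real N)"
  proof (rule prod_mono)
    fix i assume "i \<in> {0..<K}"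
    then have i: "i < K" by simp
    have "(real a - real K) / real N \<le> (real a - real i) / real N"
      using i by (intro divide_right_mono) auto
    also have "\<dots> \<le> (real a - real i) / (real N - real i)"
      using i assms by (intro divide_left_mono) auto
    finally show "0 \<le> (real a - real K) / real N \<and> (real a - real K) / real N \<le> (real a - real i) / (real N - real i)"
      using assms by auto
  qed
  finally show ?thesis by simp
qed

lemma count_avoid:
  assumes "A \<subseteq> {..<N}"
  shows "card {S. S \<subseteq> {..<N} \<and> card S = K \<and> S \<inter> A = {}} = (N - card A) choose K"
proof -
  have "{S. S \<subseteq> {..<N} \<and> card S = K \<and> S \<inter> A = {}} = {S. S \<subseteq> {..<N} - A \<and> card S = K}"
    by auto
  moreover have "card ({..<N} - A) = N - card A"
    using assms by (simp add: card_Diff_subset finite_subset)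
  ultimately show ?thesis using n_subsets[of "{..<N} - A" K] by simp
qed

lemma fiber_sum:
  fixes s N :: nat and P :: "nat \<Rightarrow> nat"
  assumes "P \<in> {..<N} \<rightarrow>\<^sub>E {..s}"
  shows "(\<Sum>i\<le>s. card {x\<in>{..<N}. P x = i}) = N"
proof -
  have "(\<Union>i\<in>{..s}. {x\<in>{..<N}. P x = i}) = {..<N}" using assms by auto
  moreover have "card (\<Union>i\<in>{..s}. {x\<in>{..<N}. P x = i}) = (\<Sum>i\<le>s. card {x\<in>{..<N}. P x = i})"
    by (rule card_UN_disjoint) auto
  ultimately show ?thesis by simp
qed

lemma core:
  fixes s K N :: nat and n :: "nat \<Rightarrow> nat"
  assumes KN: "K \<le> N"
  and H: "\<forall>P \<in> {..<N} \<rightarrow>\<^sub>E {..s}. \<exists>i\<le>s. real (n i) * (real ((N - card {x\<in>{..<N}. P x = i}) choose K) / real (N choose K)) > real s * real N"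
  shows "\<not> choosable (cmp_vertices s n) cmp_adj K"
proof
  assume ch: "choosable (cmp_vertices s n) cmp_adj K"
  define V where "V = cmp_vertices s n"
  have V_eq: "V = (SIGMA i:{..s}. {..<n i})" unfolding V_def cmp_vertices_def by auto
  have finV: "finite V" unfolding V_eq by auto
  define KS where "KS = {S. S \<subseteq> {..<N} \<and> card S = K}"
  define b where "b = N choose K"
  have cardKS: "card KS = b" unfolding KS_def b_def using n_subsets[of "{..<N}" K] by simp
  have bpos: "b > 0" unfolding b_def using KN by simp
  define \<Omega> where "\<Omega> = V \<rightarrow>\<^sub>E KS"
  have card\<Omega>: "card \<Omega> = b ^ card V" unfolding \<Omega>_def using finV cardKS by (simp add: card_PiE)
  define Parts where "Parts = {..<N} \<rightarrow>\<^sub>E {..s}"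
  have cardParts: "card Parts = (s+1) ^ N" unfolding Parts_def by (simp add: card_PiE)
  have finParts: "finite Parts" unfolding Parts_def by (simp add: finite_PiE)
  define C where "C P i = {x\<in>{..<N}. P x = i}" for P :: "nat \<Rightarrow> nat" and i
  define Good where "Good P = PiE V (\<lambda>v. {S\<in>KS. S \<inter> C P (fst v) \<noteq> {}})" for P
  have cover: "\<Omega> \<subseteq> (\<Union>P\<in>Parts. Good P)"
  proof
    fix L assume L: "L \<in> \<Omega>"
    then have "\<forall>v\<in>V. finite (L v) \<and> K \<le> card (L v)"
      unfolding \<Omega>_def KS_def by (auto dest!: PiE_mem intro: finite_subset)
    then obtain c where c: "\<forall>v\<in>V. c v \<in> L v" "\<forall>u\<in>V. \<forall>v\<in>V. cmp_adj u v \<longrightarrow> c u \<noteq> c v"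
      using ch unfolding choosable_def V_def by blast
    define P where "P x = (if x < N then (if \<exists>v\<in>V. c v = x then fst (SOME v. v \<in> V \<and> c v = x) else 0) else undefined)" for x
    have PP: "P \<in> Parts"
    proof -
      have "P x \<in> {..s}" if "x < N" for x
      proof (cases "\<exists>v\<in>V. c v = x")
        case True
        then have "(SOME v. v \<in> V \<and> c v = x) \<in> V" by (metis (mono_tags, lifting) someI_ex)
        then show ?thesis using True that unfolding P_def V_eq by auto
      qed (simp add: P_def that)
      then show ?thesis unfolding Parts_def P_def by (auto simp: PiE_def extensional_def)
    qed
    have "L \<in> Good P" unfolding Good_def
    proof (rule PiE_I)
      fix v assume v: "v \<in> V"
      have LK: "L v \<in> KS" using L v unfolding \<Omega>_def by auto
      have cvN: "c v < N" using c(1) v LK unfolding KS_def by auto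
      define w where "w = (SOME w. w \<in> V \<and> c w = c v)"
      have w: "w \<in> V \<and> c w = c v" unfolding w_def using v by (metis (mono_tags, lifting) someI_ex)
      have "fst w = fst v" using c(2) w v unfolding cmp_adj_def by metis
      then have "P (c v) = fst v" unfolding P_def using cvN v w_def by auto
      then have "c v \<in> L v \<inter> C P (fst v)" using c(1) v cvN unfolding C_def by auto
      then show "L v \<in> {S\<in>KS. S \<inter> C P (fst v) \<noteq> {}}" using LK by auto
    next
      fix v assume "v \<notin> V" then show "L v = undefined" using L unfolding \<Omega>_def by auto
    qed
    then show "L \<in> (\<Union>P\<in>Parts. Good P)" using PP by auto
  qed
  have fin\<Omega>: "finite \<Omega>" unfolding \<Omega>_def KS_def using finV by (intro finite_PiE) auto
  have "real (card \<Omega>) \<le> real (card (\<Union>P\<in>Parts. Good P))"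
    using cover by (intro of_nat_mono card_mono) (auto intro!: finite_UN_I finParts simp: Good_def KS_def finV finite_PiE)
  also have "\<dots> \<le> real (\<Sum>P\<in>Parts. card (Good P))"
    by (intro of_nat_mono card_UN_le finParts)
  also have "\<dots> = (\<Sum>P\<in>Parts. real (card (Good P)))" by simp
  also have "\<dots> < (\<Sum>P\<in>Parts. real b ^ card V / real (s+1) ^ N)"
  proof (rule sum_strict_mono)
    show "finite Parts" by (rule finParts)
    show "Parts \<noteq> {}" unfolding Parts_def by (simp add: PiE_eq_empty_iff)
  next
    fix P assume PP: "P \<in> Parts"
    define q where "q i = real ((N - card (C P i)) choose K) / real b" for i
    have CsubN: "C P i \<subseteq> {..<N}" for i unfolding C_def by auto
    have cnt: "card {S\<in>KS. S \<inter> C P i \<noteq> {}} = b - ((N - card (C P i)) choose K)" for i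
    proof -
      have "{S\<in>KS. S \<inter> C P i \<noteq> {}} = KS - {S. S \<subseteq> {..<N} \<and> card S = K \<and> S \<inter> C P i = {}}"
        unfolding KS_def by auto
      moreover have "card (KS - {S. S \<subseteq> {..<N} \<and> card S = K \<and> S \<inter> C P i = {}}) = card KS - card {S. S \<subseteq> {..<N} \<and> card S = K \<and> S \<inter> C P i = {}}"
        by (rule card_Diff_subset) (auto simp: KS_def intro: finite_subset[of _ "Pow {..<N}"])
      ultimately show ?thesis using count_avoid[OF CsubN] cardKS by simp
    qed
    have bi_le: "(N - card (C P i)) choose K \<le> b" for i
    proof -
      have "card {S. S \<subseteq> {..<N} \<and> card S = K \<and> S \<inter> C P i = {}} \<le> card KS"
        by (rule card_mono) (auto simp: KS_def intro: finite_subset[of _ "Pow {..<N}"])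
      then show ?thesis using count_avoid[OF CsubN] cardKS by simp
    qed
    have q01: "0 \<le> q i \<and> q i \<le> 1" for i
      unfolding q_def using bi_le[of i] bpos by (auto simp: divide_le_eq_1)
    have cardG: "real (card (Good P)) = real b ^ card V * (\<Prod>v\<in>V. 1 - q (fst v))"
    proof -
      have "real (card (Good P)) = (\<Prod>v\<in>V. real (b - ((N - card (C P (fst v))) choose K)))"
        unfolding Good_def using finV by (simp add: card_PiE cnt)
      also have "\<dots> = (\<Prod>v\<in>V. real b * (1 - q (fst v)))"
        using bi_le bpos by (intro prod.cong refl) (simp add: q_def of_nat_diff field_simps)
      also have "\<dots> = real b ^ card V * (\<Prod>v\<in>V. 1 - q (fst v))"
        by (simp add: prod.distrib)
      finally show ?thesis .
    qed
    from H PP obtain i where i: "i \<le> s" "real (n i) * q i > real s * real N"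
      unfolding Parts_def q_def b_def C_def by blast
    define part where "part = {i} \<times> {..<n i}"
    have partV: "part \<subseteq> V" unfolding part_def V_eq using i by auto
    have "(\<Prod>v\<in>V. 1 - q (fst v)) = (\<Prod>v\<in>V - part. 1 - q (fst v)) * (\<Prod>v\<in>part. 1 - q (fst v))"
      using prod.subset_diff[OF partV finV] by simp
    also have "\<dots> \<le> 1 * (\<Prod>v\<in>part. 1 - q (fst v))"
      using q01 by (intro mult_right_mono prod_le_1 prod_nonneg) auto
    also have "\<dots> = (\<Prod>v\<in>part. 1 - q i)" unfolding mult_1_left by (intro prod.cong) (auto simp: part_def)
    also have "\<dots> = (1 - q i) ^ n i" unfolding part_def by (simp add: card_cartesian_product)
    also have "\<dots> \<le> exp (- q i) ^ n i"
      using q01 by (intro power_mono) (auto, metis add.commute diff_conv_add_uminus exp_ge_add_one_self)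
    also have "\<dots> = exp (- (real (n i) * q i))" by (simp add: exp_of_nat_mult[symmetric])
    also have "\<dots> < exp (- (real s * real N))" using i by simp
    also have "\<dots> = 1 / exp (real s) ^ N" by (simp add: exp_minus exp_of_nat_mult[symmetric] mult.commute field_simps)
    also have "\<dots> \<le> 1 / real (s+1) ^ N"
    proof -
      have "real (s+1) \<le> exp (real s)" using exp_ge_add_one_self[of "real s"] by simp
      then have "real (s+1) ^ N \<le> exp (real s) ^ N" by (intro power_mono) auto
      then show ?thesis by (intro divide_left_mono) auto
    qed
    finally have "(\<Prod>v\<in>V. 1 - q (fst v)) < 1 / real (s+1) ^ N" .
    then have "real b ^ card V * (\<Prod>v\<in>V. 1 - q (fst v)) < real b ^ card V * (1 / real (s+1) ^ N)"
      using bpos by (intro mult_strict_left_mono) auto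
    then show "real (card (Good P)) < real b ^ card V / real (s+1) ^ N" using cardG by simp
  qed
  also have "\<dots> = real b ^ card V" using cardParts by simp
  finally show False using card\<Omega> by simp
qed

lemma analytic:
  fixes s K N :: nat and n c :: "nat \<Rightarrow> nat" and x0 L \<theta> g :: real
  assumes s1: "s \<ge> 1" and K1: "K \<ge> 1" and KN: "K \<le> N"
    and n1: "\<forall>i\<le>s. n i \<ge> 1"
    and Ldef: "L = log 2 (real (n s))" and Lpos: "L > 0"
    and x01: "x0 \<ge> 1"
    and eq: "real s = 1 / x0 + (\<Sum>j<s. x0 powr (- log 2 (real (n j)) / L))"
    and th1: "\<theta> \<ge> 1" and Kth: "real K * \<theta> * log 2 x0 \<le> L"
    and G: "1 / x0 - x0 powr (- \<theta>) \<ge> g" and gpos: "g > 0" and g1: "g \<le> 1"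
    and C2: "real (s+1) * real K / real N \<le> g / 2"
    and C3: "ln (real s * real N) / real K \<le> g / (4 * real s)"
    and csum: "(\<Sum>i\<le>s. c i) = N"
  shows "\<exists>i\<le>s. real (n i) * (real ((N - c i) choose K) / real (N choose K)) > real s * real N"
proof (rule ccontr)
  assume "\<not> ?thesis"
  then have Hn: "\<forall>i\<le>s. real (n i) * (real ((N - c i) choose K) / real (N choose K)) \<le> real s * real N"
    by (auto simp: not_less)
  define M where "M = (real s * real N) powr (1 / real K)"
  define lg where "lg i = log 2 (real (n i))" for i
  define X where "X = log 2 x0"
  have n1': "real (n i) \<ge> 1" if "i \<le> s" for i
  proof -
    have "n i \<ge> 1" using n1 that by blast
    then show ?thesis by simp
  qed
  have Npos: "N > 0" using K1 KN by simp
  have sN: "real s * real N > 0" using s1 Npos by simp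
  have X0: "X \<ge> 0" unfolding X_def using x01 by simp
  have x0X: "x0 = 2 powr X" unfolding X_def using x01 by simp
  have lg0: "lg i \<ge> 0" if "i \<le> s" for i
  proof -
    have "real (n i) \<ge> 1" using n1 that by simp
    then show ?thesis unfolding lg_def by simp
  qed
  have lgs: "lg s = L" unfolding lg_def Ldef ..
  define y where "y i = (real N - real (c i) - real K) / real N" for i
  have yb: "y i \<le> M * x0 powr (- \<theta> * lg i / L)" if i: "i \<le> s" for i
  proof (cases "y i \<le> 0")
    case True
    then show ?thesis unfolding M_def by (meson dual_order.trans mult_nonneg_nonneg powr_ge_zero)
  next
    case False
    then have ypos: "y i > 0" by simp
    have ciN: "c i \<le> N" using csum i by (metis atMost_iff finite_atMost member_le_sum zero_le)
    have "real N - real (c i) - real K > 0" using ypos Npos unfolding y_def by (simp add: zero_less_divide_iff)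
    then have aK: "K \<le> N - c i" using ciN by linarith
    have ra: "real (N - c i) = real N - real (c i)" using ciN by simp
    have "y i ^ K \<le> real ((N - c i) choose K) / real (N choose K)"
      using binom_ratio[OF aK] ciN unfolding y_def ra by simp
    also have "\<dots> \<le> real s * real N / real (n i)"
    proof -
      have "real (n i) > 0" using n1'[OF i] by linarith
      moreover have "real (n i) * (real ((N - c i) choose K) / real (N choose K)) \<le> real s * real N"
        using Hn i by blast
      ultimately show ?thesis by (simp add: le_divide_eq mult.commute)
    qed
    finally have yK: "y i ^ K \<le> real s * real N / real (n i)" .
    have "y i = (y i ^ K) powr (1 / real K)"
      using ypos K1 by (simp add: powr_realpow[symmetric] powr_powr)
    also have "\<dots> \<le> (real s * real N / real (n i)) powr (1 / real K)"
      using yK ypos by (intro powr_mono2) auto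
    also have "\<dots> = M / real (n i) powr (1 / real K)"
      unfolding M_def using sN n1'[OF i] by (simp add: powr_divide)
    also have "\<dots> \<le> M / real (n i) powr (\<theta> * X / L)"
    proof -
      have "\<theta> * X / L \<le> 1 / real K"
        using Kth K1 Lpos unfolding X_def by (simp add: field_simps)
      then have "real (n i) powr (\<theta> * X / L) \<le> real (n i) powr (1 / real K)"
        using n1'[OF i] by (intro powr_mono) auto
      moreover have "real (n i) powr (\<theta> * X / L) > 0" using n1'[OF i] by simp
      ultimately show ?thesis unfolding M_def by (intro divide_left_mono) auto
    qed
    also have "real (n i) powr (\<theta> * X / L) = x0 powr (\<theta> * lg i / L)"
    proof -
      have "real (n i) = 2 powr lg i" unfolding lg_def using n1'[OF i] by simp
      then have "real (n i) powr (\<theta> * X / L) = 2 powr (lg i * (\<theta> * X / L))" by (simp add: powr_powr)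
      also have "\<dots> = 2 powr (X * (\<theta> * lg i / L))" by (simp add: algebra_simps)
      also have "\<dots> = x0 powr (\<theta> * lg i / L)" unfolding x0X by (simp add: powr_powr)
      finally show ?thesis .
    qed
    also have "M / x0 powr (\<theta> * lg i / L) = M * x0 powr (- \<theta> * lg i / L)"
      by (simp add: powr_minus divide_inverse)
    finally show ?thesis .
  qed
  have sumy: "(\<Sum>i\<le>s. y i) = real s - real (s+1) * real K / real N"
  proof -
    have "(\<Sum>i\<le>s. y i) = (\<Sum>i\<le>s. (real N - real K) / real N - real (c i) / real N)"
      unfolding y_def by (intro sum.cong) (auto simp: diff_divide_distrib)
    also have "\<dots> = real (s+1) * ((real N - real K) / real N) - (\<Sum>i\<le>s. real (c i)) / real N"
      by (simp add: sum_subtractf sum_divide_distrib)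
    also have "(\<Sum>i\<le>s. real (c i)) = real N" using csum by (metis of_nat_sum)
    finally show ?thesis using Npos by (simp add: field_simps)
  qed
  have sumx: "(\<Sum>i\<le>s. x0 powr (- \<theta> * lg i / L)) \<le> real s - g"
  proof -
    have "(\<Sum>i\<le>s. x0 powr (- \<theta> * lg i / L)) = (\<Sum>i<s. x0 powr (- \<theta> * lg i / L)) + x0 powr (- \<theta>)"
      using lgs Lpos by (simp add: lessThan_Suc_atMost[symmetric])
    also have "(\<Sum>i<s. x0 powr (- \<theta> * lg i / L)) \<le> (\<Sum>i<s. x0 powr (- lg i / L))"
    proof (rule sum_mono)
      fix i assume "i \<in> {..<s}"
      then have "lg i \<ge> 0" using lg0 by simp
      then have "- \<theta> * lg i / L \<le> - lg i / L"
        using th1 Lpos by (simp add: divide_right_mono mult_le_cancel_right1)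
      then show "x0 powr (- \<theta> * lg i / L) \<le> x0 powr (- lg i / L)"
        using x01 by (intro powr_mono) auto
    qed
    also have "(\<Sum>i<s. x0 powr (- lg i / L)) = real s - 1 / x0" using eq unfolding lg_def by simp
    finally show ?thesis using G by simp
  qed
  have Mb: "M \<le> 1 + g / (2 * real s)"
  proof -
    have a1: "ln (real s * real N) / real K \<le> 1/2"
      using C3 g1 s1 by (smt (verit) divide_le_eq_1_pos frac_le of_nat_0_less_iff of_nat_1 of_nat_le_iff zero_less_one)
    have a0: "ln (real s * real N) / real K \<ge> 0"
    proof -
      have "1 \<le> s * N" using s1 Npos by simp
      then have "1 \<le> real s * real N" by (metis of_nat_1 of_nat_le_iff of_nat_mult)
      then show ?thesis by (intro divide_nonneg_nonneg ln_ge_zero) auto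
    qed
    have "M = exp (ln (real s * real N) / real K)"
      unfolding M_def powr_def using sN s1 Npos by simp
    also have "\<dots> \<le> 1 + 2 * (ln (real s * real N) / real K)"
    proof -
      define a where "a = ln (real s * real N) / real K"
      have "norm a \<le> 1/2" using a0 a1 unfolding a_def by simp
      from exp_bound_lemma[OF this] have "exp a \<le> 1 + 2 * a" using a0 unfolding a_def by simp
      then show ?thesis unfolding a_def .
    qed
    also have "\<dots> \<le> 1 + g / (2 * real s)" using C3 by simp
    finally show ?thesis .
  qed
  have sg: "real s - g \<ge> 0" using g1 s1 by simp
  have "real s - real (s+1) * real K / real N \<le> (\<Sum>i\<le>s. M * x0 powr (- \<theta> * lg i / L))"
    unfolding sumy[symmetric] by (intro sum_mono yb) auto
  also have "\<dots> = M * (\<Sum>i\<le>s. x0 powr (- \<theta> * lg i / L))" by (simp add: sum_distrib_left)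
  also have "\<dots> \<le> M * (real s - g)" using sumx unfolding M_def by (intro mult_left_mono) auto
  also have "\<dots> \<le> (1 + g / (2 * real s)) * (real s - g)" using Mb sg by (intro mult_right_mono) auto
  also have "\<dots> = real s - g / 2 - g * g / (2 * real s)" using s1 by (simp add: field_simps)
  also have "\<dots> < real s - g / 2" using gpos s1 by simp
  finally show False using C2 by simp
qed

lemma ev_sqrt_ln:
  fixes C :: real assumes "C > 0"
  shows "\<exists>L0. \<forall>L\<ge>L0. C * sqrt L * (1 + ln (L+1)) \<le> L"
proof (intro exI allI impI)
  fix L :: real assume L: "L \<ge> max 1 ((6*C)^4)"
  define t where "t = L powr (1/4)"
  have L1: "L \<ge> 1" using L by simp
  have t1: "t \<ge> 1" unfolding t_def using L1 by (simp add: ge_one_powr_ge_zero)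
  have tpow: "t ^ k = L powr (real k / 4)" for k :: nat
    unfolding t_def using L1 by (simp add: powr_realpow[symmetric] powr_powr)
  have tL: "t ^ 4 = L" using tpow[of 4] L1 by simp
  have sq: "sqrt L = t ^ 2" using tpow[of 2] L1 by (simp add: powr_half_sqrt)
  have "ln (L + 1) \<le> ln (2 * L)" using L1 by simp
  also have "\<dots> = ln 2 + 4 * ln t" 
  proof -
    have "ln (2 * L) = ln 2 + ln L" using L1 by (simp add: ln_mult)
    moreover have "ln L = 4 * ln t" using tL t1 ln_realpow[of t 4] by simp
    ultimately show ?thesis by simp
  qed
  also have "\<dots> \<le> 1 + 4 * t" using ln_bound[of t] t1 ln_2_less_1 by simp
  finally have lnb: "ln (L + 1) \<le> 1 + 4 * t" .
  have "C * sqrt L * (1 + ln (L+1)) \<le> C * t^2 * (2 + 4 * t)"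
    unfolding sq using lnb assms by (intro mult_left_mono) auto
  also have "\<dots> \<le> C * t^2 * (6 * t)" using t1 assms by (intro mult_left_mono) auto
  also have "\<dots> = (6 * C) * t ^ 3" by (simp add: power2_eq_square power3_eq_cube algebra_simps)
  also have "\<dots> \<le> t * t ^ 3"
  proof -
    have "(6*C)^4 \<le> t^4" unfolding tL using L by (simp only: max.bounded_iff)
    have "6 * C \<le> t"
    proof (rule ccontr)
      assume "\<not> 6 * C \<le> t"
      then have "t ^ 4 < (6 * C) ^ 4" using t1 by (intro power_strict_mono) auto
      with \<open>(6*C)^4 \<le> t^4\<close> show False by simp
    qed
    then show ?thesis using t1 by (intro mult_right_mono) auto
  qed
  also have "\<dots> = t ^ 4" by (simp only: power3_eq_cube power4_eq_xxxx mult.assoc)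
  also have "\<dots> = L" by (rule tL)
  finally show "C * sqrt L * (1 + ln (L+1)) \<le> L" .
qed

lemma ln2_ge_half: "ln (2::real) \<ge> 1/2"
proof -
  have "exp (1/2 :: real) \<le> 1 + 2 * norm (1/2 :: real)" using exp_bound_lemma[of "1/2 :: real"] by simp
  then have "exp (1/2 :: real) \<le> 2" by simp
  then show ?thesis by (subst ln_ge_iff) auto
qed

lemma chain_mono:
  fixes n :: "nat \<Rightarrow> nat"
  assumes "\<forall>i<s. n i \<le> n (Suc i)" "i \<le> j" "j \<le> s"
  shows "n i \<le> n j"
  using assms(2,3)
proof (induction j)
  case 0 then show ?case by simp
next
  case (Suc j)
  show ?case
  proof (cases "i = Suc j")
    case False
    then have "n i \<le> n j" using Suc by simp
    also have "n j \<le> n (Suc j)" using assms(1) Suc.prems by simp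
    finally show ?thesis .
  qed simp
qed

lemma step:
  fixes s :: nat and n :: "nat \<Rightarrow> nat" and \<alpha> x0 \<epsilon> L :: real
  assumes s1: "s \<ge> 1" and n02: "2 \<le> n 0" and chain: "\<forall>i<s. n i \<le> n (Suc i)"
    and Ldef: "L = log 2 (real (n s))"
    and hn0: "real (n 0) = L powr \<alpha>"
    and ha: "\<alpha> \<ge> 2 * sqrt (L / log 2 L)"
    and hx: "x0 \<ge> 1 \<and> real s * x0 - 1
           - (\<Sum>j<s. x0 powr ((L / log 2 (real (n j)) - 1) / (L / log 2 (real (n j))))) = 0"
    and e0: "0 < \<epsilon>" and e1: "\<epsilon> \<le> 1/2"
    and P1: "L \<ge> 4"
    and P2: "2 * (real s + 1) * sqrt L \<le> L"
    and P3: "1 / ln (1 + 1 / real s) \<le> L"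
    and P4: "(real s + 1)^2 * sqrt L \<le> (1 - (1 + 1 / real s) powr (- \<epsilon>)) * (ln (1 + 1 / real s))^2 * L"
    and P5: "24 * real s * (real s + 1) * sqrt L * ln (L + 1) + 2 * (real s + 1) * sqrt L
               \<le> (1 - (1 + 1 / real s) powr (- \<epsilon>)) * L"
    and P6: "real s \<le> L + 1"
  shows "(1 - \<epsilon>) * L / log 2 x0 \<le> real (ch_complete_multipartite s n)"
proof -
  define lg where "lg i = log 2 (real (n i))" for i
  define lm where "lm = ln (1 + 1 / real s)"
  define c where "c = 1 - (1 + 1 / real s) powr (- \<epsilon>)"
  have sr: "real s \<ge> 1" using s1 by simp
  have lmpos: "lm > 0" unfolding lm_def using sr by (intro ln_gt_zero) simp
  have nmono: "n i \<le> n j" if "i \<le> j" "j \<le> s" for i j using chain_mono[OF chain that] .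
  have n2: "real (n i) \<ge> 2" if "i \<le> s" for i
  proof -
    have "n 0 \<le> n i" using nmono[of 0 i] that by simp
    then show ?thesis using n02 by simp
  qed
  have lg1: "lg i \<ge> 1" if "i \<le> s" for i
    unfolding lg_def using n2[OF that] by simp
  have lgL: "lg i \<le> L" if "i \<le> s" for i
    unfolding lg_def Ldef using n2[OF that] nmono[OF that] by simp
  have lgs: "lg s = L" unfolding lg_def Ldef ..
  have Lpos: "L > 0" using P1 by simp
  have lg0: "lg 0 \<ge> 2 * sqrt L"
  proof -
    define l2 where "l2 = log 2 L"
    have l2: "l2 \<ge> 1" unfolding l2_def using P1 by simp
    have e1: "lg 0 = \<alpha> * l2" unfolding lg_def l2_def hn0 by (simp add: log_powr)
    have "\<alpha> * l2 \<ge> (2 * sqrt (L / l2)) * l2" using ha l2 unfolding l2_def by (intro mult_right_mono) auto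
    then have e2: "\<alpha> * l2 \<ge> 2 * (sqrt (L / l2) * l2)" by simp
    have e3: "sqrt (L / l2) * l2 = sqrt (L * l2)"
    proof -
      have "L * l2 = (L / l2) * l2 ^ 2" using l2 by (simp add: power2_eq_square)
      then have "sqrt (L * l2) = sqrt (L / l2) * sqrt (l2 ^ 2)" by (simp only: real_sqrt_mult)
      then show ?thesis using l2 by simp
    qed
    have e4: "sqrt (L * l2) \<ge> sqrt L" using l2 Lpos by simp
    show ?thesis using e1 e2 e3 e4 by linarith
  qed
  have x01: "x0 \<ge> 1" using hx by simp
  have x0pos: "x0 > 0" using x01 by simp
  have eq2: "real s = 1 / x0 + (\<Sum>j<s. x0 powr (- lg j / L))"
  proof -
    have trm: "x0 powr ((L / lg j - 1) / (L / lg j)) = x0 * x0 powr (- lg j / L)" if "j < s" for j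
    proof -
      have "lg j \<ge> 1" using lg1 that by simp
      then have "(L / lg j - 1) / (L / lg j) = 1 + (- lg j / L)" using Lpos by (simp add: field_simps)
      then have "x0 powr ((L / lg j - 1) / (L / lg j)) = x0 powr 1 * x0 powr (- lg j / L)"
        by (simp only: powr_add)
      then show ?thesis using x0pos by simp
    qed
    have "real s * x0 - 1 - (\<Sum>j<s. x0 * x0 powr (- lg j / L)) = 0"
      using hx trm unfolding lg_def by simp
    then have "real s * x0 = 1 + x0 * (\<Sum>j<s. x0 powr (- lg j / L))" by (simp add: sum_distrib_left)
    then show ?thesis using x0pos by (simp add: field_simps)
  qed
  have tub: "x0 powr (- lg j / L) \<le> 1" if "j < s" for j
  proof -
    have "- lg j / L \<le> 0" using lg1[of j] that Lpos by simp
    then have "x0 powr (- lg j / L) \<le> x0 powr 0" using x01 by (intro powr_mono) auto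
    then show ?thesis using x0pos by simp
  qed
  have tlb: "x0 powr (- lg j / L) \<ge> 1 / x0" if "j < s" for j
  proof -
    have "- 1 \<le> - lg j / L" using lgL[of j] that Lpos by (simp add: field_simps)
    then have "x0 powr (-1) \<le> x0 powr (- lg j / L)" using x01 by (intro powr_mono) auto
    then show ?thesis using x0pos by (simp add: powr_minus divide_inverse)
  qed
  have hsum: "(\<Sum>j<s. 1 - x0 powr (- lg j / L)) = 1 / x0"
    using eq2 by (simp add: sum_subtractf)
  have x0lb: "real s * x0 \<ge> real s + 1"
  proof -
    have "(\<Sum>j<s. 1 - x0 powr (- lg j / L)) \<le> (\<Sum>j<s. 1 - 1 / x0)" using tlb by (intro sum_mono) auto
    then have "1 / x0 \<le> (\<Sum>j<s. 1 - 1 / x0)" using hsum by simp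
    then have "1 / x0 \<le> real s * (1 - 1 / x0)" by simp
    then have "1 \<le> real s * (x0 - 1)" using x0pos by (simp add: field_simps)
    then show ?thesis by (simp add: algebra_simps)
  qed
  have x0gt: "x0 \<ge> 1 + 1 / real s" using x0lb sr by (simp add: field_simps)
  define lam where "lam = ln x0"
  have lamlb: "lam \<ge> lm" unfolding lam_def lm_def using x0gt sr by (intro ln_mono) (auto intro: add_pos_nonneg)
  have lampos: "lam > 0" using lamlb lmpos by simp
  have A1: "(x0 - 1) * lam \<le> sqrt L / 2"
  proof -
    have "1 - x0 powr (- lg 0 / L) \<le> (\<Sum>j<s. 1 - x0 powr (- lg j / L))"
      using s1 tub by (intro member_le_sum[where f="\<lambda>j. 1 - x0 powr (- lg j / L)"]) auto
    then have "1 - x0 powr (- lg 0 / L) \<le> 1 / x0" using hsum by simp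
    define u where "u = lam * lg 0 / L"
    have upos: "u \<ge> 0" unfolding u_def using lampos lg1[of 0] Lpos by simp
    have "x0 powr (- lg 0 / L) = exp (- u)" unfolding u_def lam_def powr_def using x0pos by (simp add: algebra_simps)
    also have "\<dots> \<le> 1 / (1 + u)"
    proof -
      have "1 + u \<le> exp u" by (rule exp_ge_add_one_self)
      then show ?thesis using upos by (simp add: exp_minus field_simps)
    qed
    finally have "1 - 1 / (1 + u) \<le> 1 / x0" using \<open>1 - x0 powr (- lg 0 / L) \<le> 1 / x0\<close> by simp
    then have "u * x0 \<le> 1 + u" using upos x0pos by (simp add: field_simps)
    then have "u * (x0 - 1) \<le> 1" by (simp add: algebra_simps)
    then have "(x0 - 1) * lam * lg 0 \<le> L" unfolding u_def using Lpos by (simp add: field_simps)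
    then have "(x0 - 1) * lam \<le> L / lg 0" using lg1[of 0] by (simp add: field_simps)
    also have "\<dots> \<le> L / (2 * sqrt L)" using lg0 Lpos lg1[of 0] by (intro divide_left_mono) (auto intro!: mult_pos_pos)
    also have "\<dots> = sqrt L / 2" using Lpos by (simp add: field_simps real_sqrt_mult[symmetric])
    finally show ?thesis .
  qed
  define A where "A = x0 * lam"
  have Ab: "A \<le> (real s + 1) * sqrt L / 2"
  proof -
    have "x0 \<le> (real s + 1) * (x0 - 1)" using x0lb by (simp add: algebra_simps)
    then have "A \<le> (real s + 1) * ((x0 - 1) * lam)" unfolding A_def using lampos by (simp add: mult_right_mono)
    also have "\<dots> \<le> (real s + 1) * (sqrt L / 2)" using A1 by (intro mult_left_mono) auto
    finally show ?thesis by simp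
  qed
  have lamA: "lam \<le> A" unfolding A_def using x01 lampos by simp
  define X where "X = log 2 x0"
  have Xlam: "X = lam / ln 2" unfolding X_def lam_def log_def ..
  have Xge: "X \<ge> lam" unfolding Xlam using lampos ln_2_less_1 by (simp add: field_simps)
  have Xle: "X \<le> 2 * lam" unfolding Xlam using lampos ln2_ge_half by (simp add: field_simps)
  have Xpos: "X > 0" using Xge lampos by simp
  have XsL: "X \<le> (real s + 1) * sqrt L" using Xle lamA Ab by simp
  define \<theta> where "\<theta> = 1 / (1 - \<epsilon>)"
  define K where "K = nat \<lfloor>(1 - \<epsilon>) * L / X\<rfloor>"
  have Kr: "(1 - \<epsilon>) * L / X \<ge> L / (2 * X)" using e1 Lpos Xpos by (simp add: field_simps)
  have K1r: "L / (2 * X) \<ge> 1"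
  proof -
    have "2 * X \<le> 2 * (real s + 1) * sqrt L" using XsL by (simp only: mult.assoc)
    then have "2 * X \<le> L" using P2 by linarith
    then show ?thesis using Xpos by (simp add: field_simps)
  qed
  have Kle: "real K \<le> (1 - \<epsilon>) * L / X" unfolding K_def using Kr K1r by simp
  have Kge: "real K > (1 - \<epsilon>) * L / X - 1" unfolding K_def using Kr K1r by linarith
  have K1: "K \<ge> 1" unfolding K_def using Kr K1r by linarith
  have Kth: "real K * \<theta> * log 2 x0 \<le> L"
  proof -
    have "real K * X \<le> (1 - \<epsilon>) * L" using Kle Xpos by (simp add: field_simps)
    then have "real K * X * \<theta> \<le> (1 - \<epsilon>) * L * \<theta>" unfolding \<theta>_def using e1 by (intro mult_right_mono) auto
    also have "\<dots> = L" unfolding \<theta>_def using e1 by simp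
    finally show ?thesis unfolding X_def by (simp add: algebra_simps)
  qed
  have th1: "\<theta> \<ge> 1" unfolding \<theta>_def using e0 e1 by simp
  define N where "N = (nat \<lceil>L\<rceil>) ^ 2"
  have NL: "real N \<ge> L * L" unfolding N_def using Lpos by (simp add: power2_eq_square mult_mono)
  have NU: "real N \<le> (L + 1) ^ 2"
  proof -
    have "real (nat \<lceil>L\<rceil>) = real_of_int \<lceil>L\<rceil>" using Lpos by simp
    also have "\<dots> \<le> L + 1" by linarith
    finally have "real (nat \<lceil>L\<rceil>) \<le> L + 1" .
    then have "real (nat \<lceil>L\<rceil>) ^ 2 \<le> (L + 1) ^ 2" by (intro power_mono) auto
    then show ?thesis unfolding N_def by simp
  qed
  have KLX: "real K \<le> L / X"
  proof -
    have "(1 - \<epsilon>) * L / X \<le> L / X" using e0 Lpos Xpos by (intro divide_right_mono) auto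
    then show "real K \<le> L / X" using Kle by linarith
  qed
  have KN: "K \<le> N"
  proof -
    have "real K \<le> L / X" by (rule KLX)
    also have "\<dots> \<le> L / lm" using Xge lamlb lmpos Lpos by (intro divide_left_mono) auto
    also have "\<dots> \<le> L * L" using P3 Lpos lmpos unfolding lm_def by (simp add: field_simps)
    finally show ?thesis using NL by linarith
  qed
  define g where "g = c / x0"
  have cpos: "c > 0" unfolding c_def using sr e0 by (simp add: powr_less_one)
  have c1: "c \<le> 1" unfolding c_def by simp
  have gpos: "g > 0" unfolding g_def using cpos x0pos by simp
  have g1: "g \<le> 1" unfolding g_def using c1 x01 cpos by (simp add: divide_le_eq_1)
  have G: "1 / x0 - x0 powr (- \<theta>) \<ge> g"
  proof -
    have "1 - \<theta> \<le> - \<epsilon>" unfolding \<theta>_def using e0 e1 by (simp add: field_simps)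
    then have "x0 powr (1 - \<theta>) \<le> x0 powr (- \<epsilon>)" using x01 by (intro powr_mono) auto
    also have "\<dots> \<le> (1 + 1 / real s) powr (- \<epsilon>)" using x0gt e0 sr by (intro powr_mono2') (auto intro: add_pos_pos)
    finally have h: "x0 powr (1 - \<theta>) \<le> 1 - c" unfolding c_def by simp
    have "x0 powr (- \<theta>) = x0 powr (1 - \<theta>) / x0" using x0pos by (simp add: powr_diff powr_minus_divide)
    then have "1 / x0 - x0 powr (- \<theta>) = (1 - x0 powr (1 - \<theta>)) / x0" by (simp add: diff_divide_distrib)
    also have "\<dots> \<ge> c / x0" using h x0pos by (intro divide_right_mono) auto
    finally show ?thesis unfolding g_def .
  qed
  have C2: "real (s+1) * real K / real N \<le> g / 2"
  proof -
    have Kx: "real K * x0 \<le> L * (real s + 1) * sqrt L / (2 * lm ^ 2)"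
    proof -
      have "real K * x0 \<le> (L / X) * x0" using KLX x0pos by (intro mult_right_mono) auto
      also have "\<dots> \<le> (L / lam) * x0" using Xge lampos Lpos x0pos by (intro mult_right_mono divide_left_mono) auto
      also have "\<dots> = L * A / lam ^ 2" unfolding A_def using lampos by (simp add: power2_eq_square field_simps)
      also have "\<dots> \<le> L * A / lm ^ 2" using lamlb lmpos Lpos lampos x0pos unfolding A_def
        by (intro divide_left_mono mult_pos_pos power_mono) auto
      also have "\<dots> \<le> L * ((real s + 1) * sqrt L / 2) / lm ^ 2" using Ab Lpos lmpos
        by (intro divide_right_mono mult_left_mono) auto
      finally show ?thesis by simp
    qed
    have "2 * (real s + 1) * (real K * x0) \<le> 2 * (real s + 1) * (L * (real s + 1) * sqrt L / (2 * lm ^ 2))"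
      using Kx by (intro mult_left_mono) auto
    also have "\<dots> = L * ((real s + 1)^2 * sqrt L) / lm ^ 2" using lmpos by (simp add: field_simps power2_eq_square)
    also have "\<dots> \<le> L * (c * lm ^ 2 * L) / lm ^ 2" using P4 Lpos lmpos unfolding c_def lm_def
      by (intro divide_right_mono mult_left_mono) auto
    also have "\<dots> = c * (L * L)" using lmpos by simp
    also have "\<dots> \<le> c * real N" using NL cpos by (intro mult_left_mono) auto
    finally have "2 * (real s + 1) * (real K * x0) \<le> c * real N" .
    moreover have "real N > 0" using KN K1 by simp
    ultimately show ?thesis unfolding g_def using x0pos by (simp add: field_simps)
  qed
  have C3: "ln (real s * real N) / real K \<le> g / (4 * real s)"
  proof -
    have Npos: "real N > 0" using KN K1 by simp
    have "real s * real N \<le> (L + 1) * (L + 1) ^ 2" using P6 NU sr by (intro mult_mono) auto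
    also have "(L + 1) * (L + 1) ^ 2 = (L + 1) ^ 3" by (simp add: power2_eq_square power3_eq_cube)
    finally have sN3: "real s * real N \<le> (L + 1) ^ 3" .
    have sNp: "real s * real N > 0" using sr Npos by simp
    have "ln (real s * real N) \<le> ln ((L + 1) ^ 3)" using sN3 sNp by (rule ln_mono)
    also have "\<dots> = 3 * ln (L + 1)" using Lpos by (simp add: ln_realpow)
    finally have lnsN: "ln (real s * real N) \<le> 3 * ln (L + 1)" .
    have lnL: "ln (L + 1) \<ge> 0" using Lpos by simp
    have xX: "x0 * X \<le> (real s + 1) * sqrt L"
    proof -
      have "x0 * X \<le> x0 * (2 * lam)" using Xle x0pos by simp
      also have "\<dots> = 2 * A" unfolding A_def by simp
      finally show ?thesis using Ab by simp
    qed
    have "24 * real s * (x0 * X) * ln (L + 1) \<le> 24 * real s * ((real s + 1) * sqrt L) * ln (L + 1)"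
      using xX lnL sr by (intro mult_right_mono mult_left_mono) auto
    moreover have "2 * c * X \<le> 2 * (real s + 1) * sqrt L"
    proof -
      have "c * X \<le> 1 * X" using c1 Xpos by (intro mult_right_mono) auto
      then show ?thesis using XsL by linarith
    qed
    ultimately have "24 * real s * (x0 * X) * ln (L + 1) + 2 * c * X \<le> c * L" using P5 unfolding c_def
      by (simp add: algebra_simps)
    then have "12 * real s * x0 * ln (L + 1) \<le> c * (L / (2 * X) - 1)" using Xpos
      by (simp add: field_simps)
    also have "\<dots> \<le> c * real K" using Kge Kr cpos by (intro mult_left_mono) auto
    finally have "12 * real s * x0 * ln (L + 1) \<le> c * real K" .
    moreover have "4 * real s * x0 * ln (real s * real N) \<le> 4 * real s * x0 * (3 * ln (L + 1))"
      using lnsN sr x0pos by (intro mult_left_mono) auto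
    ultimately have "4 * real s * x0 * ln (real s * real N) \<le> c * real K" by linarith
    then show ?thesis unfolding g_def using K1 x0pos sr by (simp add: field_simps)
  qed
  have n1': "\<forall>i\<le>s. n i \<ge> 1"
  proof (intro allI impI)
    fix i assume "i \<le> s"
    then have "real (n i) \<ge> 2" by (rule n2)
    then show "n i \<ge> 1" by simp
  qed
  have eq2': "real s = 1 / x0 + (\<Sum>j<s. x0 powr (- log 2 (real (n j)) / L))" using eq2 unfolding lg_def .
  have core_hyp: "\<forall>P \<in> {..<N} \<rightarrow>\<^sub>E {..s}. \<exists>i\<le>s. real (n i) * (real ((N - card {x\<in>{..<N}. P x = i}) choose K) / real (N choose K)) > real s * real N"
  proof
    fix P assume P: "P \<in> {..<N} \<rightarrow>\<^sub>E {..s}"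
    show "\<exists>i\<le>s. real (n i) * (real ((N - card {x\<in>{..<N}. P x = i}) choose K) / real (N choose K)) > real s * real N"
      by (rule analytic[OF s1 K1 KN n1' Ldef Lpos x01 eq2' th1 Kth G gpos g1 C2 C3 fiber_sum[OF P]])
  qed
  have nch: "\<not> choosable (cmp_vertices s n) cmp_adj K" by (rule core[OF KN core_hyp])
  have finV: "finite (cmp_vertices s n)"
  proof -
    have "cmp_vertices s n = (SIGMA i:{..s}. {..<n i})" unfolding cmp_vertices_def by auto
    then show ?thesis by simp
  qed
  have "K + 1 \<le> ch_complete_multipartite s n"
    unfolding ch_complete_multipartite_def
    by (rule ch_ge[OF finV _ nch]) (simp add: cmp_adj_def)
  then have "real K + 1 \<le> real (ch_complete_multipartite s n)" by linarith
  moreover have "(1 - \<epsilon>) * L / log 2 x0 < real K + 1" using Kge unfolding X_def by simp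
  ultimately show ?thesis by simp
qed

lemma ev_sqrt_ln': 
  fixes C :: real assumes "C > 0"
  shows "\<exists>L0. \<forall>L\<ge>L0. C * sqrt L * (1 + ln (L+1)) \<le> L \<and> C * sqrt L \<le> L \<and> C * sqrt L * ln (L + 1) \<le> L"
proof -
  obtain L0 where L0: "\<forall>L\<ge>L0. C * sqrt L * (1 + ln (L+1)) \<le> L" using ev_sqrt_ln[OF assms] by blast
  show ?thesis
  proof (intro exI allI impI conjI)
    fix L assume L: "L \<ge> max L0 0"
    then have h: "C * sqrt L * (1 + ln (L+1)) \<le> L" using L0 by simp
    have lnp: "ln (L + 1) \<ge> 0" using L by simp
    have cs: "C * sqrt L \<ge> 0" using assms L by simp
    show "C * sqrt L * (1 + ln (L+1)) \<le> L" by (rule h)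
    have "C * sqrt L \<le> C * sqrt L * (1 + ln (L+1))" using cs lnp by (simp add: mult_le_cancel_left1)
    then show "C * sqrt L \<le> L" using h by linarith
    have "C * sqrt L * ln (L + 1) \<le> C * sqrt L * (1 + ln (L+1))" using cs lnp by (intro mult_left_mono) auto
    then show "C * sqrt L * ln (L + 1) \<le> L" using h by linarith
  qed
qed

theorem theorem6:
  fixes s :: nat and n :: "nat \<Rightarrow> nat \<Rightarrow> nat" and \<alpha> x0 :: "nat \<Rightarrow> real"
  assumes "s \<ge> 1"
    and "\<forall>m. 2 \<le> n m 0"
    and "\<forall>m. \<forall>i<s. n m i \<le> n m (Suc i)"
    and "filterlim (\<lambda>m. n m s) at_top sequentially"
    and "\<forall>m. real (n m 0) = log 2 (real (n m s)) powr \<alpha> m"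
    and "\<forall>m. \<alpha> m \<ge> 2 * sqrt (log 2 (real (n m s)) / log 2 (log 2 (real (n m s))))"
    and "\<forall>m. x0 m \<ge> 1 \<and>
           real s * x0 m - 1
           - (\<Sum>j<s. x0 m powr
                ((log 2 (real (n m s)) / log 2 (real (n m j)) - 1)
                 / (log 2 (real (n m s)) / log 2 (real (n m j))))) = 0"
  shows "\<forall>\<epsilon>>0. eventually (\<lambda>m. real (ch_complete_multipartite s (n m))
            \<ge> (1 - \<epsilon>) * log 2 (real (n m s)) / log 2 (x0 m)) sequentially"
proof (intro allI impI)
  fix \<epsilon> :: real assume e: "\<epsilon> > 0"
  define e' where "e' = min \<epsilon> (1/2)"
  have e'0: "e' > 0" and e'1: "e' \<le> 1/2" and e'e: "e' \<le> \<epsilon>" unfolding e'_def using e by auto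
  have sr: "real s \<ge> 1" using assms(1) by simp
  define lm where "lm = ln (1 + 1 / real s)"
  define c where "c = 1 - (1 + 1 / real s) powr (- e')"
  have lmpos: "lm > 0" unfolding lm_def using sr by (intro ln_gt_zero) simp
  have cpos: "c > 0" unfolding c_def using sr e'0 by (simp add: powr_less_one)
  obtain La where La: "\<forall>L\<ge>La. (2 * (real s + 1)) * sqrt L \<le> L"
  proof -
    have "2 * (real s + 1) > 0" by simp
    from ev_sqrt_ln'[OF this] show ?thesis using that by blast
  qed
  obtain Lb where Lb: "\<forall>L\<ge>Lb. ((real s + 1)^2 / (c * lm^2)) * sqrt L \<le> L"
  proof -
    have "(real s + 1)^2 / (c * lm^2) > 0" using cpos lmpos by simp
    from ev_sqrt_ln'[OF this] show ?thesis using that by blast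
  qed
  obtain Lc where Lc: "\<forall>L\<ge>Lc. ((24 * real s * (real s + 1) + 2 * (real s + 1)) / c) * sqrt L * (1 + ln (L+1)) \<le> L"
  proof -
    have "(24 * real s * (real s + 1) + 2 * (real s + 1)) / c > 0" using cpos sr by (intro divide_pos_pos add_pos_pos mult_pos_pos) auto
    from ev_sqrt_ln'[OF this] show ?thesis using that by blast
  qed
  define L0 where "L0 = Max {4, 1 / lm, real s, La, Lb, Lc}"
  have L0ge: "L0 \<ge> 4" "L0 \<ge> 1 / lm" "L0 \<ge> real s" "L0 \<ge> La" "L0 \<ge> Lb" "L0 \<ge> Lc"
    unfolding L0_def by auto
  have conds: "L \<ge> 4 \<and> 2 * (real s + 1) * sqrt L \<le> L \<and> 1 / lm \<le> L
     \<and> (real s + 1)^2 * sqrt L \<le> c * lm^2 * L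
     \<and> 24 * real s * (real s + 1) * sqrt L * ln (L + 1) + 2 * (real s + 1) * sqrt L \<le> c * L
     \<and> real s \<le> L + 1" if L: "L \<ge> L0" for L
  proof (intro conjI)
    show "L \<ge> 4" "1 / lm \<le> L" "real s \<le> L + 1" using L L0ge by auto
    show "2 * (real s + 1) * sqrt L \<le> L" using La L L0ge by auto
    have "((real s + 1)^2 / (c * lm^2)) * sqrt L \<le> L" using Lb L L0ge by auto
    then show "(real s + 1)^2 * sqrt L \<le> c * lm^2 * L" using cpos lmpos by (simp add: field_simps)
    have h: "((24 * real s * (real s + 1) + 2 * (real s + 1)) / c) * sqrt L * (1 + ln (L+1)) \<le> L"
      using Lc L L0ge by auto
    have lnp: "ln (L + 1) \<ge> 0" using L L0ge by simp
    have sq: "sqrt L \<ge> 0" using L L0ge by simp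
    have "24 * real s * (real s + 1) * sqrt L * ln (L + 1) + 2 * (real s + 1) * sqrt L
        \<le> (24 * real s * (real s + 1) + 2 * (real s + 1)) * sqrt L * (1 + ln (L+1))"
      using lnp sq sr by (simp add: algebra_simps)
    also have "\<dots> \<le> c * L" using h cpos by (simp add: field_simps)
    finally show "24 * real s * (real s + 1) * sqrt L * ln (L + 1) + 2 * (real s + 1) * sqrt L \<le> c * L" .
  qed
  define Z where "Z = nat \<lceil>2 powr L0\<rceil>"
  have evZ: "eventually (\<lambda>m. Z \<le> n m s) sequentially"
    using assms(4) unfolding filterlim_at_top by blast
  show "eventually (\<lambda>m. real (ch_complete_multipartite s (n m))
            \<ge> (1 - \<epsilon>) * log 2 (real (n m s)) / log 2 (x0 m)) sequentially"
  proof (rule eventually_mono[OF evZ])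
    fix m assume mZ: "Z \<le> n m s"
    define L where "L = log 2 (real (n m s))"
    have "2 powr L0 \<le> real Z" unfolding Z_def by linarith
    also have "\<dots> \<le> real (n m s)" using mZ by simp
    finally have h2: "2 powr L0 \<le> real (n m s)" .
    then have npos: "real (n m s) > 0" by (smt (verit) powr_gt_zero)
    have LL0: "L \<ge> L0" unfolding L_def using h2 npos by (simp add: le_log_iff)
    note cL = conds[OF LL0]
    have st: "(1 - e') * L / log 2 (x0 m) \<le> real (ch_complete_multipartite s (n m))"
    proof (rule step[where \<alpha>="\<alpha> m"])
      show "L = log 2 (real (n m s))" by (rule L_def)
    qed (use assms(1) assms(2) assms(3) assms(5) assms(6) assms(7) e'0 e'1 cL in
         \<open>auto simp: L_def lm_def c_def\<close>)
    have x01: "x0 m \<ge> 1" using assms(7) by simp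
    have "(1 - \<epsilon>) * L / log 2 (x0 m) \<le> (1 - e') * L / log 2 (x0 m)"
      using e'e cL x01 by (intro divide_right_mono mult_right_mono) auto
    with st show "(1 - \<epsilon>) * log 2 (real (n m s)) / log 2 (x0 m) \<le> real (ch_complete_multipartite s (n m))"
      unfolding L_def by linarith
  qed
qed

end
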